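(* Consider the population game without a central planner, i.e. with threshold $A_t = 1$ for all $t \in [0,T]$. Suppose $g_{eq} \in C[0,T]$ with $g_{eq,t} \in [0,1]$ is a symmetric (Nash) equilibrium exposure profile, i.e. $$J_\alpha(g_{eq}, g_{eq}, 1) \le J_\alpha(g_{eq}, g^\alpha, 1)$$ for every admissible individual strategy $g^\alpha \in C[0,T]$ with $g^\alpha_t\in[0,1]$, and the canonical individual's equilibrium strategy equals $g_{eq}$. Then, by the Pontryagin minimum principle, there is an adjoint function $\lambda$ on $[0,T]$ such that for all $t\in[0,T]$ $$g_{eq,t}=\min\Big(\frac{B}{\beta I_t (C-\lambda_t)},1\Big)\mathbf 1_{\{C>\lambda_t\}}+\mathbf 1_{\{C\le\lambda_t\}},$$ and $(S,I,\lambda)$ satisfy $$\frac{dS_t}{dt}=-\beta g_{eq,t}^2S_tI_t,\qquad \frac{dI_t}{dt}=\beta g_{eq,t}^2S_tI_t-\gamma I_t,\qquad \frac{d\lambda_t}{dt}=g_{eq,t}\big(B-\beta I_t g_{eq,t}(C-\lambda_t)\big),$$ with boundary conditions $S_0=1-\epsilon$, $I_0=\epsilon$, $\lambda_T=-R$.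
   Context: Model: a finite horizon $T>0$; positive real constants $\beta$ (infection probability per interaction), $\gamma$ (recovery rate), $\epsilon$ (initial infected fraction), $B$ (benefit rate per unit exposure), $C$ (one-time cost of infection), $R$ (reward for surviving to $T$). The population plays a symmetric exposure profile $g\in C[0,T]$ and the susceptible and infected fractions evolve by $\dot S_t=-\beta g_t^2S_tI_t$, $\dot I_t=\beta g_t^2S_tI_t-\gamma I_t$, $S_0=1-\epsilon$, $I_0=\epsilon$. A canonical individual $\alpha$ playing $g^\alpha\in C[0,T]$ is infected at a random time $\tau_\alpha$ whose survival probability $P_t:=P(\tau_\alpha>t)$ satisfies $\dot P_t=-\beta g^\alpha_t g_t I_t P_t$, $P_0=1$. A planner strategy is $A\in C[0,T]$ with $A_t\in[0,1]$, and the individual must satisfy $g^\alpha_t, g_t\le A_t$. The individual's cost is $$J_\alpha(g,g^\alpha,A)=\int_0^T P_t\, g^\alpha_t\{-B+C\beta g_tI_t\}\,dt-R\,P_T,$$ equivalently $\mathbb E\big[-\int_0^{T\wedge\tau_\alpha}Bg^\alpha_s\,ds+C\mathbf 1_{\{\tau_\alpha\le T\}}-R\mathbf 1_{\{\tau_\alpha>T\}}\big]$. *)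

theory Defs
  imports "HOL-Analysis.Analysis"
begin

text \<open>Survival probability of the canonical individual: the unique solution of
  dP/dt = - beta * ga t * g t * I t * P t, P 0 = 1.\<close>
definition surv :: "real \<Rightarrow> (real \<Rightarrow> real) \<Rightarrow> (real \<Rightarrow> real) \<Rightarrow> (real \<Rightarrow> real) \<Rightarrow> real \<Rightarrow> real" where
  "surv \<beta> ga g I t = exp (- integral {0..t} (\<lambda>s. \<beta> * ga s * g s * I s))"

text \<open>Individual cost J_alpha(g, ga, A), with I the infected fraction generated by g.
  The planner threshold A only enters through the admissibility constraint.\<close>
definition cost :: "real \<Rightarrow> real \<Rightarrow> real \<Rightarrow> real \<Rightarrow> real \<Rightarrow> (real \<Rightarrow> real) \<Rightarrow> (real \<Rightarrow> real)
    \<Rightarrow> (real \<Rightarrow> real) \<Rightarrow> real" where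
  "cost T \<beta> B C R I g ga =
     integral {0..T} (\<lambda>t. surv \<beta> ga g I t * ga t * (- B + C * \<beta> * g t * I t))
     - R * surv \<beta> ga g I T"

end

theory Submission
  imports Defs
begin


lemma ftc_d:
  fixes f :: "real \<Rightarrow> real"
  assumes "continuous_on {0..T} f" "t \<in> {0..T}"
  shows "((\<lambda>u. integral {0..u} f) has_real_derivative f t) (at t within {0..T})"
  using assms by (simp add: has_real_derivative_iff_has_vector_derivative integral_has_vector_derivative)

lemma zero_lemma:
  fixes f :: "real \<Rightarrow> real"
  assumes "T > 0" "continuous_on {0..T} f" "\<forall>t\<in>{0..T}. f t \<le> 0" "integral {0..T} f \<ge> 0"
    "t \<in> {0..T}"
  shows "f t = 0"
proof -
  have int: "f integrable_on {0..T}" using assms(2) integrable_continuous_real by blast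
  have "integral {0..T} f \<le> integral {0..T} (\<lambda>_. 0)"
    using assms(3) int by (intro integral_le) auto
  then have z: "integral {0..T} f = 0" using assms(4) by simp
  have "((\<lambda>x. - f x) has_integral 0) (cbox 0 T)"
    using has_integral_neg[OF int[THEN integrable_integral]] z by simp
  have c1: "continuous_on (cbox 0 T) (\<lambda>x. - f x)" using assms(2) by (auto intro: continuous_intros)
  have c2: "\<And>x. x \<in> box 0 T \<Longrightarrow> 0 \<le> - f x" using assms(3) by auto
  have c3: "((\<lambda>x. - f x) has_integral 0) (cbox 0 T)"
      using has_integral_neg[OF int[THEN integrable_integral]] z by simp
  have c4: "box 0 T \<noteq> {}" using assms(1) by auto
  have c5: "t \<in> cbox 0 T" using assms(5) by auto
  have "- f t = 0" using has_integral_0_cbox_imp_0[OF c1 c2 c3 c4 c5] by simp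
  then show ?thesis by simp
qed

theorem theorem1:
  fixes T \<beta> \<gamma> \<epsilon> B C R :: real
    and geq S I :: "real \<Rightarrow> real"
  assumes pos: "T > 0" "\<beta> > 0" "\<gamma> > 0" "\<epsilon> > 0" "B > 0" "C > 0" "R > 0"
    and geq_cont: "continuous_on {0..T} geq"
    and geq_range: "\<forall>t\<in>{0..T}. 0 \<le> geq t \<and> geq t \<le> 1"
    and S_ode: "\<forall>t\<in>{0..T}. (S has_real_derivative (- \<beta> * (geq t)\<^sup>2 * S t * I t)) (at t within {0..T})"
    and I_ode: "\<forall>t\<in>{0..T}. (I has_real_derivative (\<beta> * (geq t)\<^sup>2 * S t * I t - \<gamma> * I t)) (at t within {0..T})"
    and S0: "S 0 = 1 - \<epsilon>" and I0: "I 0 = \<epsilon>"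
    and equilibrium: "\<forall>ga. continuous_on {0..T} ga \<and> (\<forall>t\<in>{0..T}. 0 \<le> ga t \<and> ga t \<le> 1)
        \<longrightarrow> cost T \<beta> B C R I geq geq \<le> cost T \<beta> B C R I geq ga"
  shows "\<exists>lam :: real \<Rightarrow> real.
     (\<forall>t\<in>{0..T}. geq t = (if C > lam t then min (B / (\<beta> * I t * (C - lam t))) 1 else 1))
   \<and> (\<forall>t\<in>{0..T}. (S has_real_derivative (- \<beta> * (geq t)\<^sup>2 * S t * I t)) (at t within {0..T}))
   \<and> (\<forall>t\<in>{0..T}. (I has_real_derivative (\<beta> * (geq t)\<^sup>2 * S t * I t - \<gamma> * I t)) (at t within {0..T}))
   \<and> (\<forall>t\<in>{0..T}. (lam has_real_derivative (geq t * (B - \<beta> * I t * geq t * (C - lam t)))) (at t within {0..T}))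
   \<and> S 0 = 1 - \<epsilon> \<and> I 0 = \<epsilon> \<and> lam T = - R"
proof -
  let ?D = "{0..T::real}"
  have T0: "0 \<in> ?D" "T \<in> ?D" using pos by auto
  have Sc: "continuous_on ?D S" using S_ode by (intro DERIV_continuous_on) auto
  have Ic: "continuous_on ?D I" using I_ode by (intro DERIV_continuous_on) auto
  define c where "c t = \<beta> * (geq t)\<^sup>2 * S t - \<gamma>" for t
  have cc: "continuous_on ?D c" unfolding c_def using Sc geq_cont by (intro continuous_intros)
  define Ci where "Ci t = integral {0..t} c" for t
  have dCi: "(Ci has_real_derivative c t) (at t within ?D)" if "t \<in> ?D" for t
    unfolding Ci_def using ftc_d[OF cc that] .
  have "((\<lambda>t. I t * exp (- Ci t)) has_real_derivative 0) (at t within ?D)" if "t \<in> ?D" for t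
  proof -
    have "((\<lambda>t. I t * exp (- Ci t)) has_real_derivative
       (\<beta> * (geq t)\<^sup>2 * S t * I t - \<gamma> * I t) * exp (- Ci t) + I t * (exp (- Ci t) * (- c t))) (at t within ?D)"
      using I_ode that dCi[OF that] by (auto intro!: derivative_eq_intros)
    moreover have "(\<beta> * (geq t)\<^sup>2 * S t * I t - \<gamma> * I t) * exp (- Ci t) + I t * (exp (- Ci t) * (- c t)) = 0"
      unfolding c_def by (simp add: algebra_simps)
    ultimately show ?thesis by simp
  qed
  then obtain q where q: "\<forall>t\<in>?D. I t * exp (- Ci t) = q"
    using has_field_derivative_zero_constant[of ?D "\<lambda>t. I t * exp (- Ci t)"] by auto
  have "Ci 0 = 0" unfolding Ci_def by simp
  then have "q = \<epsilon>" using q T0 I0 by force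
  have Ipos: "I t > 0" if "t \<in> ?D" for t
  proof -
    have "I t * exp (- Ci t) = \<epsilon>" using q that \<open>q = \<epsilon>\<close> by auto
    then have "I t = \<epsilon> * exp (Ci t)" by (simp add: exp_minus field_simps)
    then show ?thesis using pos by simp
  qed
  define a where "a t = \<beta> * I t * (geq t)\<^sup>2" for t
  define b where "b t = geq t * (B - \<beta> * I t * geq t * C)" for t
  have ac: "continuous_on ?D a" unfolding a_def using Ic geq_cont by (intro continuous_intros)
  have bc: "continuous_on ?D b" unfolding b_def using Ic geq_cont by (intro continuous_intros)
  define A where "A t = integral {0..t} a" for t
  have dA: "(A has_real_derivative a t) (at t within ?D)" if "t \<in> ?D" for t
    unfolding A_def using ftc_d[OF ac that] .
  have Ac: "continuous_on ?D A" using dA by (intro DERIV_continuous_on) auto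
  have ebc: "continuous_on ?D (\<lambda>s. exp (- A s) * b s)" using Ac bc by (intro continuous_intros)
  define G where "G t = integral {0..t} (\<lambda>s. exp (- A s) * b s)" for t
  have dG: "(G has_real_derivative exp (- A t) * b t) (at t within ?D)" if "t \<in> ?D" for t
    unfolding G_def using ftc_d[OF ebc that] .
  define K where "K = - R * exp (- A T) - G T"
  define lam where "lam t = exp (A t) * (K + G t)" for t
  have lamT: "lam T = - R" unfolding lam_def K_def by (simp add: exp_minus field_simps)
  have dlam: "(lam has_real_derivative (geq t * (B - \<beta> * I t * geq t * (C - lam t)))) (at t within ?D)"
    if "t \<in> ?D" for t
  proof -
    have "(lam has_real_derivative exp (A t) * a t * (K + G t) + exp (A t) * (exp (- A t) * b t)) (at t within ?D)"
      unfolding lam_def using dA[OF that] dG[OF that] by (auto intro!: derivative_eq_intros)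
    moreover have "exp (A t) * a t * (K + G t) + exp (A t) * (exp (- A t) * b t)
        = geq t * (B - \<beta> * I t * geq t * (C - lam t))"
      unfolding lam_def a_def b_def by (simp add: exp_minus field_simps power2_eq_square)
    ultimately show ?thesis by simp
  qed
  have lamc: "continuous_on ?D lam" using dlam by (intro DERIV_continuous_on) auto
  define h where "h t = - B + \<beta> * geq t * I t * (C - lam t)" for t
  have hc: "continuous_on ?D h" unfolding h_def using Ic geq_cont lamc by (intro continuous_intros)
  have costid: "cost T \<beta> B C R I geq ga
     = integral ?D (\<lambda>t. surv \<beta> ga geq I t * (ga t - geq t) * h t) + lam 0"
    if gac: "continuous_on ?D ga" for ga
  proof -
    define f where "f s = \<beta> * ga s * geq s * I s" for s
    have fc: "continuous_on ?D f" unfolding f_def using gac Ic geq_cont by (intro continuous_intros)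
    define P where "P t = surv \<beta> ga geq I t" for t
    have P_eq: "P t = exp (- integral {0..t} f)" for t
      unfolding P_def surv_def f_def by simp
    have dP: "(P has_real_derivative P t * (- f t)) (at t within ?D)" if "t \<in> ?D" for t
      unfolding P_eq[abs_def] using ftc_d[OF fc that] by (auto intro!: derivative_eq_intros)
    have Pc: "continuous_on ?D P" using dP by (intro DERIV_continuous_on) auto
    define phi' where "phi' t = P t * (- f t) * lam t + P t * (geq t * (B - \<beta> * I t * geq t * (C - lam t)))" for t
    have dphi: "((\<lambda>t. P t * lam t) has_vector_derivative phi' t) (at t within ?D)" if "t \<in> ?D" for t
      unfolding has_real_derivative_iff_has_vector_derivative[symmetric] phi'_def
      using dP[OF that] dlam[OF that] by (auto intro!: derivative_eq_intros)
    have phiint: "(phi' has_integral (P T * lam T - P 0 * lam 0)) ?D"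
      using fundamental_theorem_of_calculus[OF _ dphi] pos by auto
    have P0: "P 0 = 1" unfolding P_eq by simp
    define g1 where "g1 t = P t * (ga t - geq t) * h t" for t
    have g1c: "continuous_on ?D g1" unfolding g1_def using Pc gac geq_cont hc by (intro continuous_intros)
    have g1int: "(g1 has_integral integral ?D g1) ?D"
      using g1c integrable_continuous_real by blast
    have ident: "P t * ga t * (- B + C * \<beta> * geq t * I t) = g1 t - phi' t" for t
      unfolding g1_def phi'_def h_def f_def by (simp add: algebra_simps power2_eq_square)
    have "((\<lambda>t. P t * ga t * (- B + C * \<beta> * geq t * I t)) has_integral
        (integral ?D g1 - (P T * lam T - P 0 * lam 0))) ?D"
      unfolding ident using has_integral_diff[OF g1int phiint] by simp
    then have "integral ?D (\<lambda>t. P t * ga t * (- B + C * \<beta> * geq t * I t))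
        = integral ?D g1 - (P T * lam T - P 0 * lam 0)" by (rule integral_unique)
    then have "cost T \<beta> B C R I geq ga = integral ?D g1 + lam 0"
      unfolding cost_def using lamT P0 by (simp add: P_def[symmetric])
    then show ?thesis unfolding g1_def P_def .
  qed
  define ga where "ga t = geq t + min 1 (max 0 (- h t)) * (1 - geq t) - min 1 (max 0 (h t)) * geq t" for t
  have gac: "continuous_on ?D ga" unfolding ga_def using hc geq_cont by (intro continuous_intros)
  have garange: "\<forall>t\<in>?D. 0 \<le> ga t \<and> ga t \<le> 1"
  proof
    fix t assume t: "t \<in> ?D"
    have g: "0 \<le> geq t" "geq t \<le> 1" using geq_range t by auto
    show "0 \<le> ga t \<and> ga t \<le> 1"
    proof (cases "h t \<ge> 0")
      case True
      then have "ga t = geq t - min 1 (h t) * geq t" unfolding ga_def by simp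
      moreover have "min 1 (h t) * geq t \<le> geq t" "0 \<le> min 1 (h t) * geq t"
        using g True by (auto intro: mult_left_le_one_le mult_nonneg_nonneg simp: mult_le_cancel_right1)
      ultimately show ?thesis using g by linarith
    next
      case False
      then have "ga t = geq t + min 1 (- h t) * (1 - geq t)" unfolding ga_def by simp
      moreover have "min 1 (- h t) * (1 - geq t) \<le> 1 - geq t"
        using g False by (intro mult_left_le_one_le) auto
      moreover have "0 \<le> min 1 (- h t) * (1 - geq t)"
        using g False by auto
      ultimately show ?thesis using g by linarith
    qed
  qed
  have "cost T \<beta> B C R I geq geq \<le> cost T \<beta> B C R I geq ga"
    using equilibrium gac garange by blast
  moreover have "cost T \<beta> B C R I geq geq = lam 0"
    using costid[OF geq_cont] by simp
  ultimately have intpos: "integral ?D (\<lambda>t. surv \<beta> ga geq I t * (ga t - geq t) * h t) \<ge> 0"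
    using costid[OF gac] by simp
  have survpos: "surv \<beta> ga geq I t > 0" for t unfolding surv_def by simp
  have prodle: "(ga t - geq t) * h t \<le> 0" if t: "t \<in> ?D" for t
  proof (cases "h t \<ge> 0")
    case True
    then have "(ga t - geq t) * h t = - (min 1 (h t) * geq t * h t)" unfolding ga_def by simp
    moreover have "0 \<le> min 1 (h t) * geq t * h t" using True geq_range t by simp
    ultimately show ?thesis by linarith
  next
    case False
    then have "(ga t - geq t) * h t = min 1 (- h t) * (1 - geq t) * h t" unfolding ga_def by simp
    moreover have "0 \<le> min 1 (- h t) * (1 - geq t)" using False geq_range t by simp
    ultimately show ?thesis using False by (simp add: mult_nonneg_nonpos)
  qed
  have Fc: "continuous_on ?D (\<lambda>t. surv \<beta> ga geq I t * (ga t - geq t) * h t)"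
  proof -
    have "continuous_on ?D (\<lambda>t. integral {0..t} (\<lambda>s. \<beta> * ga s * geq s * I s))"
    proof -
      have fc: "continuous_on ?D (\<lambda>s. \<beta> * ga s * geq s * I s)"
        using gac geq_cont Ic by (intro continuous_intros)
      show ?thesis using ftc_d[OF fc] by (intro DERIV_continuous_on) auto
    qed
    then have "continuous_on ?D (surv \<beta> ga geq I)" unfolding surv_def[abs_def]
      by (intro continuous_intros)
    then show ?thesis using gac geq_cont hc by (intro continuous_intros)
  qed
  have F0: "surv \<beta> ga geq I t * (ga t - geq t) * h t = 0" if t: "t \<in> ?D" for t
  proof (rule zero_lemma[OF pos(1) Fc _ intpos t])
    show "\<forall>t\<in>?D. surv \<beta> ga geq I t * (ga t - geq t) * h t \<le> 0"
      using prodle survpos by (simp add: mult_nonneg_nonpos mult.assoc less_imp_le)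
  qed
  have key: "h t \<le> 0 \<and> (h t < 0 \<longrightarrow> geq t = 1)" if t: "t \<in> ?D" for t
  proof -
    have z: "(ga t - geq t) * h t = 0" using F0[OF t] survpos[of t] by (simp add: mult.assoc)
    have g: "0 \<le> geq t" "geq t \<le> 1" using geq_range t by auto
    show ?thesis
    proof (cases "h t > 0")
      case True
      then have "min 1 (h t) * geq t * h t = 0" using z unfolding ga_def by simp
      then have "geq t = 0" using True by (auto simp: min_def split: if_splits)
      then have "h t = - B" unfolding h_def by simp
      then show ?thesis using True pos by simp
    next
      case False
      show ?thesis
      proof (cases "h t < 0")
        case True
        then have "min 1 (- h t) * (1 - geq t) * h t = 0" using z unfolding ga_def by simp
        then show ?thesis using True by (auto simp: min_def split: if_splits)
      next
        case False2: False
        then show ?thesis using False by simp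
      qed
    qed
  qed
  have formula: "geq t = (if C > lam t then min (B / (\<beta> * I t * (C - lam t))) 1 else 1)"
    if t: "t \<in> ?D" for t
  proof -
    have k: "h t \<le> 0" "h t < 0 \<longrightarrow> geq t = 1" using key[OF t] by auto
    have Ip: "I t > 0" using Ipos[OF t] .
    have g: "0 \<le> geq t" "geq t \<le> 1" using geq_range t by auto
    show ?thesis
    proof (cases "C > lam t")
      case True
      define Dd where "Dd = \<beta> * I t * (C - lam t)"
      have Dp: "Dd > 0" unfolding Dd_def using pos Ip True by simp
      have hD: "h t = - B + geq t * Dd" unfolding h_def Dd_def by (simp add: algebra_simps)
      show ?thesis
      proof (cases "h t < 0")
        case True2: True
        then have "geq t = 1" using k by simp
        then have "Dd < B" using hD True2 by simp
        then have "B / Dd > 1" using Dp by (simp add: field_simps)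
        then show ?thesis using True \<open>geq t = 1\<close> by (simp add: Dd_def)
      next
        case False
        then have "geq t * Dd = B" using hD k by simp
        then have "geq t = B / Dd" using Dp by (simp add: field_simps)
        then show ?thesis using True g by (simp add: Dd_def)
      qed
    next
      case False
      have "geq t * I t * (C - lam t) \<le> 0"
        using False g Ip by (simp add: mult_nonneg_nonpos)
      then have "\<beta> * (geq t * I t * (C - lam t)) \<le> 0" using pos by (simp add: mult_nonneg_nonpos)
      moreover have "h t = - B + \<beta> * (geq t * I t * (C - lam t))" unfolding h_def by (simp add: algebra_simps)
      ultimately have "h t < 0" using pos by linarith
      then show ?thesis using k False by simp
    qed
  qed
  show ?thesis
    apply (rule exI[of _ lam])
    using formula S_ode I_ode dlam S0 I0 lamT by blast
qed

end
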